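(* Let $q_0$ and $q_1$ be quadratic linking functions on a finite abelian group $G$. Then $q_0$ is isometric to $q_1$ if and only if $(b(q_0),\beta(q_0))\cong(b(q_1),\beta(q_1))$ and $K(q_0)=K(q_1)$.
   Context: A linking form on a finite abelian group $G$ is a symmetric bilinear map $b:G\times G\to\mathbb{Q}/\mathbb{Z}$ that is nonsingular ($b(x,y)=0$ for all $x$ implies $y=0$). A quadratic linking function on $G$ is a map $q:G\to\mathbb{Q}/\mathbb{Z}$ such that $b(q)(x,y):=q(x+y)-q(x)-q(y)$ is a linking form; $q$ is a quadratic linking form if moreover $q(-x)=q(x)$. For $a\in G$, $q_a(x):=q(x)+b(q)(x,a)$. Every quadratic linking function can be written $q=q^o_a$ with $q^o$ a quadratic linking form refining $b(q)$ and $a\in G$; $\beta(q):=2a$ is independent of this choice. An isomorphism $(b_0,\beta_0)\cong(b_1,\beta_1)$ is a group automorphism $\theta$ of $G$ with $b_1(\theta x,\theta y)=b_0(x,y)$ and $\theta(\beta_0)=\beta_1$. $q_0$ and $q_1$ are isometric if $q_1\circ\theta=q_0$ for some automorphism $\theta$. The Kervaire–Arf invariant is $K(q)=\arg(GS(q))/2\pi\in\mathbb{Q}/\mathbb{Z}$, where $GS(q)=\sum_{x\in G}\exp(2\pi i\,q(x))$ (this sum is nonzero). *)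

theory Defs
  imports Complex_Main
begin

definition qz_rel :: "rat \<Rightarrow> rat \<Rightarrow> bool" where
  "qz_rel x y \<longleftrightarrow> x - y \<in> \<int>"

quotient_type qz = rat / qz_rel
  morphisms rep_qz abs_qz
proof (rule equivpI)
  show "reflp qz_rel" by (rule reflpI) (simp add: qz_rel_def)
  show "symp qz_rel"
    by (rule sympI) (metis Ints_minus minus_diff_eq qz_rel_def)
  show "transp qz_rel"
  proof (rule transpI)
    fix x y z assume "qz_rel x y" "qz_rel y z"
    then have "(x - y) + (y - z) \<in> \<int>" unfolding qz_rel_def by (rule Ints_add)
    then show "qz_rel x z" by (simp add: qz_rel_def)
  qed
qed

instantiation qz :: ab_group_add
begin

lift_definition zero_qz :: qz is "0::rat" .

lift_definition plus_qz :: "qz \<Rightarrow> qz \<Rightarrow> qz" is "(+)"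
proof -
  fix a b c d :: rat assume "qz_rel a b" "qz_rel c d"
  then have "(a - b) + (c - d) \<in> \<int>" unfolding qz_rel_def by (rule Ints_add)
  then show "qz_rel (a + c) (b + d)" by (simp add: qz_rel_def algebra_simps)
qed

lift_definition uminus_qz :: "qz \<Rightarrow> qz" is "uminus"
  by (metis Ints_minus minus_diff_eq minus_diff_minus qz_rel_def)

lift_definition minus_qz :: "qz \<Rightarrow> qz \<Rightarrow> qz" is "(-)"
proof -
  fix a b c d :: rat assume "qz_rel a b" "qz_rel c d"
  then have "(a - b) - (c - d) \<in> \<int>" unfolding qz_rel_def by (rule Ints_diff)
  then show "qz_rel (a - c) (b - d)" by (simp add: qz_rel_def algebra_simps)
qed

instance
  by standard (transfer; simp add: qz_rel_def algebra_simps)+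

end

lift_definition qz_exp :: "qz \<Rightarrow> complex" is "\<lambda>r. cis (2 * pi * of_rat r)"
proof -
  fix a b :: rat assume "qz_rel a b"
  then obtain k :: int where k: "a - b = of_int k"
    unfolding qz_rel_def by (auto elim: Ints_cases)
  then have "of_rat a = (of_rat b :: real) + of_int k"
    by (metis add_diff_cancel_left' diff_add_cancel of_rat_add of_rat_of_int_eq)
  then have "2 * pi * of_rat a = 2 * pi * of_rat b + 2 * pi * real_of_int k"
    by (simp add: algebra_simps)
  then show "cis (2 * pi * of_rat a) = cis (2 * pi * of_rat b)"
    by (simp add: cis_mult[symmetric] cis_multiple_2pi Ints_of_int)
qed

definition linking_form :: "('g::{finite,ab_group_add} \<Rightarrow> 'g \<Rightarrow> qz) \<Rightarrow> bool" where
  "linking_form b \<longleftrightarrow>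
     (\<forall>x y. b x y = b y x) \<and>
     (\<forall>x y z. b (x + y) z = b x z + b y z) \<and>
     (\<forall>x y z. b x (y + z) = b x y + b x z) \<and>
     (\<forall>y. (\<forall>x. b x y = 0) \<longrightarrow> y = 0)"

definition bq :: "('g::{finite,ab_group_add} \<Rightarrow> qz) \<Rightarrow> 'g \<Rightarrow> 'g \<Rightarrow> qz" where
  "bq q x y = q (x + y) - q x - q y"

definition quadratic_linking_function :: "('g::{finite,ab_group_add} \<Rightarrow> qz) \<Rightarrow> bool" where
  "quadratic_linking_function q \<longleftrightarrow> linking_form (bq q)"

definition quadratic_linking_form :: "('g::{finite,ab_group_add} \<Rightarrow> qz) \<Rightarrow> bool" where
  "quadratic_linking_form q \<longleftrightarrow> quadratic_linking_function q \<and> (\<forall>x. q (- x) = q x)"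

definition qshift :: "('g::{finite,ab_group_add} \<Rightarrow> qz) \<Rightarrow> 'g \<Rightarrow> 'g \<Rightarrow> qz" where
  "qshift q a x = q x + bq q x a"

definition beta :: "('g::{finite,ab_group_add} \<Rightarrow> qz) \<Rightarrow> 'g" where
  "beta q = (THE c. \<exists>qo a. quadratic_linking_form qo \<and> bq qo = bq q \<and> q = qshift qo a \<and> c = a + a)"

definition group_automorphism :: "('g::ab_group_add \<Rightarrow> 'g) \<Rightarrow> bool" where
  "group_automorphism \<theta> \<longleftrightarrow> bij \<theta> \<and> (\<forall>x y. \<theta> (x + y) = \<theta> x + \<theta> y)"

definition pair_iso ::
  "('g::{finite,ab_group_add} \<Rightarrow> 'g \<Rightarrow> qz) \<Rightarrow> 'g \<Rightarrow> ('g \<Rightarrow> 'g \<Rightarrow> qz) \<Rightarrow> 'g \<Rightarrow> bool" where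
  "pair_iso b0 \<beta>0 b1 \<beta>1 \<longleftrightarrow>
     (\<exists>\<theta>. group_automorphism \<theta> \<and> (\<forall>x y. b1 (\<theta> x) (\<theta> y) = b0 x y) \<and> \<theta> \<beta>0 = \<beta>1)"

definition isometric :: "('g::{finite,ab_group_add} \<Rightarrow> qz) \<Rightarrow> ('g \<Rightarrow> qz) \<Rightarrow> bool" where
  "isometric q0 q1 \<longleftrightarrow> (\<exists>\<theta>. group_automorphism \<theta> \<and> q1 \<circ> \<theta> = q0)"

definition gauss_sum :: "('g::{finite,ab_group_add} \<Rightarrow> qz) \<Rightarrow> complex" where
  "gauss_sum q = (\<Sum>x\<in>UNIV. qz_exp (q x))"

text \<open>Kervaire--Arf invariant arg(GS q)/2pi; a real representative, to be read modulo Z\<close>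
definition kervaire_arf :: "('g::{finite,ab_group_add} \<Rightarrow> qz) \<Rightarrow> real" where
  "kervaire_arf q = Arg (gauss_sum q) / (2 * pi)"

end

theory Submission
  imports Defs
begin

lemma qz_exp_add: "qz_exp (a + b) = qz_exp a * qz_exp b"
  by transfer (simp add: cis_mult of_rat_add algebra_simps)

lemma qz_exp_zero[simp]: "qz_exp 0 = 1"
  by transfer simp

lemma qz_exp_diff: "qz_exp (a - b) = qz_exp a * qz_exp (- b)"
  by (metis diff_conv_add_uminus qz_exp_add)

lemma qz_exp_minus_mult: "qz_exp a * qz_exp (- a) = 1"
  by (metis qz_exp_add qz_exp_zero right_minus)

lemma qz_exp_eq_1: "qz_exp a = 1 \<Longrightarrow> a = 0"
proof transfer
  fix r :: rat assume "cis (2 * pi * of_rat r) = 1"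
  then have "cos (2 * pi * of_rat r) = 1"
    by (metis Re_complex_of_real cis.sel(1) complex_Re_numeral numeral_One one_complex.sel(1))
  then obtain n :: int where n: "2 * pi * of_rat r = real_of_int n * 2 * pi"
    using cos_one_2pi_int by blast
  then have "(of_rat r :: real) = of_int n" by simp
  then have "r = of_int n"
    by (metis of_rat_eq_iff of_rat_of_int_eq)
  then show "qz_rel r 0" by (simp add: qz_rel_def)
qed

lemma qz_half: "(u::qz) + u = 0 \<Longrightarrow> v + v = 0 \<Longrightarrow> u \<noteq> 0 \<Longrightarrow> v \<noteq> 0 \<Longrightarrow> u = v"
proof transfer
  fix r s :: rat
  assume r: "qz_rel (r + r) 0" and s: "qz_rel (s + s) 0" and nr: "\<not> qz_rel r 0" and ns: "\<not> qz_rel s 0"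
  obtain m :: int where m: "r + r = of_int m" using r unfolding qz_rel_def by (auto elim: Ints_cases)
  obtain n :: int where n: "s + s = of_int n" using s unfolding qz_rel_def by (auto elim: Ints_cases)
  have om: "odd m"
  proof
    assume "even m" then obtain k where "m = 2 * k" by blast
    with m have "r = of_int k" by simp
    with nr show False by (simp add: qz_rel_def)
  qed
  have on: "odd n"
  proof
    assume "even n" then obtain k where "n = 2 * k" by blast
    with n have "s = of_int k" by simp
    with ns show False by (simp add: qz_rel_def)
  qed
  obtain k where k: "m - n = 2 * k" proof -
    have "even (m - n)" using om on by simp
    then show ?thesis using that by blast
  qed
  have "r - s = of_int k"
  proof -
    have "2 * (r - s) = of_int (m - n)" using m n by (simp add: algebra_simps)
    also have "\<dots> = 2 * of_int k" by (simp add: k)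
    finally show ?thesis by simp
  qed
  then show "qz_rel r s" by (simp add: qz_rel_def)
qed


lemma lf_sym: "linking_form b \<Longrightarrow> b x y = b y x"
  by (simp add: linking_form_def)
lemma lf_addL: "linking_form b \<Longrightarrow> b (x + y) z = b x z + b y z"
  by (simp add: linking_form_def)
lemma lf_addR: "linking_form b \<Longrightarrow> b x (y + z) = b x y + b x z"
  by (simp add: linking_form_def)
lemma lf_nondeg: "linking_form b \<Longrightarrow> (\<And>x. b x y = 0) \<Longrightarrow> y = 0"
  by (simp add: linking_form_def)

lemma hom_zero: "(\<And>x y. h (x + y) = h x + (h y::'b::ab_group_add)) \<Longrightarrow> h (0::'a::ab_group_add) = 0"
  by (metis add_cancel_right_right add_0)
lemma hom_minus: "(\<And>x y. h (x + y) = h x + (h y::'b::ab_group_add)) \<Longrightarrow> h (- (x::'a::ab_group_add)) = - h x"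
  by (metis hom_zero add.right_inverse add_eq_0_iff2 eq_neg_iff_add_eq_0)
lemma hom_diff: "(\<And>x y. h (x + y) = h x + (h y::'b::ab_group_add)) \<Longrightarrow> h ((x::'a::ab_group_add) - y) = h x - h y"
  by (metis diff_conv_add_uminus hom_minus)

lemma lf_minusL: "linking_form b \<Longrightarrow> b (- x) z = - b x z"
  using hom_minus[of "\<lambda>x. b x z"] lf_addL by blast
lemma lf_minusR: "linking_form b \<Longrightarrow> b x (- z) = - b x z"
  using hom_minus[of "\<lambda>z. b x z"] lf_addR by blast
lemma lf_diffR: "linking_form b \<Longrightarrow> b x (y - z) = b x y - b x z"
  using hom_diff[of "\<lambda>z. b x z"] lf_addR by blast
lemma lf_zeroL: "linking_form b \<Longrightarrow> b 0 z = 0"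
  using hom_zero[of "\<lambda>x. b x z"] lf_addL by blast
lemma lf_zeroR: "linking_form b \<Longrightarrow> b x 0 = 0"
  using hom_zero[of "\<lambda>z. b x z"] lf_addR by blast

lemma sum_shift: "(\<Sum>x\<in>UNIV. f (x + c)) = (\<Sum>x\<in>(UNIV::'g::{finite,ab_group_add} set). f x)"
  by (rule sum.reindex_bij_witness[of _ "\<lambda>x. x - c" "\<lambda>x. x + c"]) auto

lemma char_sum_zero:
  fixes \<chi> :: "'g::{finite,ab_group_add} \<Rightarrow> qz"
  assumes hom: "\<And>x y. \<chi> (x + y) = \<chi> x + \<chi> y" and y: "\<chi> y \<noteq> 0"
  shows "(\<Sum>x\<in>UNIV. qz_exp (\<chi> x)) = 0"
proof -
  let ?S = "\<Sum>x\<in>UNIV. qz_exp (\<chi> x)"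
  have "?S = (\<Sum>x\<in>UNIV. qz_exp (\<chi> (x + y)))" by (rule sum_shift[symmetric])
  also have "\<dots> = qz_exp (\<chi> y) * ?S"
    by (simp add: hom qz_exp_add sum_distrib_left mult.commute)
  finally have "(qz_exp (\<chi> y) - 1) * ?S = 0" by (simp add: algebra_simps)
  moreover have "qz_exp (\<chi> y) \<noteq> 1" using y qz_exp_eq_1 by blast
  ultimately show ?thesis by simp
qed

lemma orth:
  fixes b :: "'g::{finite,ab_group_add} \<Rightarrow> 'g \<Rightarrow> qz"
  assumes lf: "linking_form b"
  shows "(\<Sum>y\<in>UNIV. qz_exp (b y z)) = (if z = 0 then of_nat (card (UNIV::'g set)) else 0)"
proof (cases "z = 0")
  case True then show ?thesis by (simp add: lf_zeroR[OF lf])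
next
  case False
  then obtain y where "b y z \<noteq> 0" using lf_nondeg[OF lf] by blast
  then have "(\<Sum>y\<in>UNIV. qz_exp (b y z)) = 0"
    by (intro char_sum_zero[of "\<lambda>y. b y z" y]) (simp_all add: lf_addL[OF lf])
  with False show ?thesis by simp
qed

lemma duality:
  fixes b :: "'g::{finite,ab_group_add} \<Rightarrow> 'g \<Rightarrow> qz"
  assumes lf: "linking_form b" and hom: "\<And>x y. h (x + y) = h x + h y"
  shows "\<exists>c. \<forall>x. h x = b x c"
proof (rule ccontr)
  assume "\<not> ?thesis"
  then have ne: "\<And>c. \<exists>x. h x - b x c \<noteq> 0" by auto
  have "(\<Sum>c\<in>UNIV. \<Sum>x\<in>UNIV. qz_exp (h x - b x c)) = (\<Sum>c\<in>(UNIV::'g set). 0)"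
  proof (rule sum.cong[OF refl])
    fix c
    obtain x where "h x - b x c \<noteq> 0" using ne by blast
    then show "(\<Sum>x\<in>UNIV. qz_exp (h x - b x c)) = 0"
      by (intro char_sum_zero[of _ x]) (simp_all add: hom lf_addL[OF lf] algebra_simps)
  qed
  also have "\<dots> = 0" by simp
  finally have z: "(\<Sum>c\<in>UNIV. \<Sum>x\<in>UNIV. qz_exp (h x - b x c)) = 0" .
  have "(\<Sum>c\<in>UNIV. \<Sum>x\<in>UNIV. qz_exp (h x - b x c))
      = (\<Sum>x\<in>UNIV. qz_exp (h x) * (\<Sum>c\<in>UNIV. qz_exp (b c (- x))))"
    apply (subst sum.swap)
    apply (simp add: sum_distrib_left lf_minusR[OF lf] lf_sym[OF lf, of x for x] qz_exp_diff)
    done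
  also have "\<dots> = (\<Sum>x\<in>UNIV. if x = (0::'g) then of_nat (card (UNIV::'g set)) else 0)"
    proof (rule sum.cong[OF refl])
    fix x :: 'g
    show "qz_exp (h x) * (\<Sum>c\<in>UNIV. qz_exp (b c (- x))) = (if x = 0 then of_nat (card (UNIV::'g set)) else 0)"
      using orth[OF lf, of "- x"] hom_zero[of h, OF hom] by simp
  qed
  also have "\<dots> = of_nat (card (UNIV::'g set))" by simp
  finally show False using z by simp
qed


lemma halving:
  fixes b :: "'g::{finite,ab_group_add} \<Rightarrow> 'g \<Rightarrow> qz"
  assumes lf: "linking_form b" and ann: "\<And>y. y + y = 0 \<Longrightarrow> b y c = 0"
  shows "\<exists>a. a + a = c"
proof (rule ccontr)
  assume na: "\<not> (\<exists>a. a + a = c)"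
  have ne: "a + a - c \<noteq> 0" for a using na by auto
  let ?T = "\<Sum>a\<in>UNIV. \<Sum>y\<in>UNIV. qz_exp (b y (a + a - c))"
  have "?T = (\<Sum>a\<in>(UNIV::'g set). 0)"
    by (rule sum.cong[OF refl]) (use ne in \<open>simp add: orth[OF lf]\<close>)
  then have z: "?T = 0" by simp
  have "?T = (\<Sum>y\<in>UNIV. \<Sum>a\<in>UNIV. qz_exp (b y (a + a - c)))" by (rule sum.swap)
  also have "\<dots> = (\<Sum>y\<in>UNIV. (\<Sum>a\<in>UNIV. qz_exp (b a (y + y))) * qz_exp (- b y c))"
  proof (rule sum.cong[OF refl])
    fix y :: 'g
    have "\<And>a. b y (a + a - c) = b a (y + y) + (- b y c)"
      by (simp add: lf_diffR[OF lf] lf_addR[OF lf] lf_sym[OF lf, of y])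
    then show "(\<Sum>a\<in>UNIV. qz_exp (b y (a + a - c))) = (\<Sum>a\<in>UNIV. qz_exp (b a (y + y))) * qz_exp (- b y c)"
      by (simp add: qz_exp_diff sum_distrib_right)
  qed
  also have "\<dots> = (\<Sum>y\<in>UNIV. if y + y = (0::'g) then of_nat (card (UNIV::'g set)) else 0)"
  proof (rule sum.cong[OF refl])
    fix y :: 'g
    show "(\<Sum>a\<in>UNIV. qz_exp (b a (y + y))) * qz_exp (- b y c) = (if y + y = 0 then of_nat (card (UNIV::'g set)) else 0)"
      using orth[OF lf, of "y + y"] ann[of y] by simp
  qed
  also have "\<dots> = (\<Sum>y\<in>{y. y + y = (0::'g)}. of_nat (card (UNIV::'g set)))"
    using sum.inter_filter[of UNIV "\<lambda>y. of_nat (card (UNIV::'g set)) :: complex" "\<lambda>y::'g. y + y = 0"] by simp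
  also have "\<dots> = of_nat (card {y. y + y = (0::'g)}) * of_nat (card (UNIV::'g set))"
    by simp
  finally have "of_nat (card {y. y + y = (0::'g)}) * (of_nat (card (UNIV::'g set)) :: complex) = 0"
    using z by simp
  moreover have "card {y. y + y = (0::'g)} \<noteq> 0"
  proof -
    have "(0::'g) \<in> {y. y + y = 0}" by simp
    then show ?thesis by (metis card_0_eq empty_iff finite)
  qed
  ultimately show False by simp
qed

lemma qlf_lf: "quadratic_linking_function q \<Longrightarrow> linking_form (bq q)"
  by (simp add: quadratic_linking_function_def)

lemma q_add: "q (x + y) = q x + q y + bq q x y"
  by (simp add: bq_def)

lemma q_zero: assumes "quadratic_linking_function q" shows "q 0 = 0"
proof -
  have "bq q 0 0 = 0" using lf_zeroL[OF qlf_lf[OF assms]] .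
  then show ?thesis by (simp add: bq_def)
qed

lemma bq_minus_minus: assumes Q: "quadratic_linking_function q" shows "bq q (- x) (- y) = bq q x y"
  by (simp add: lf_minusL[OF qlf_lf[OF Q]] lf_minusR[OF qlf_lf[OF Q]])

lemma d_hom:
  assumes "quadratic_linking_function q"
  shows "q (x + y) - q (- (x + y)) = (q x - q (- x)) + (q y - q (- y))"
proof -
  have "q (- (x + y)) = q (- x) + q (- y) + bq q x y"
    using q_add[of q "- x" "- y"] bq_minus_minus[OF assms] by (simp add: add.commute)
  then show ?thesis using q_add[of q x y] by (simp add: algebra_simps)
qed

lemma beta_unique:
  assumes Q: "quadratic_linking_function q" and c: "\<And>x. q x - q (- x) = bq q x c"
  shows "beta q = c"
proof -
  have lf: "linking_form (bq q)" using qlf_lf[OF Q] .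
  have uniq: "c' = c" if c': "\<And>x. q x - q (- x) = bq q x c'" for c'
  proof -
    have "bq q x (c' - c) = 0" for x
    proof -
      have "bq q x c' = bq q x c" using c[of x] c'[of x] by simp
      then show ?thesis by (simp add: lf_diffR[OF lf])
    qed
    then have "c' - c = 0" by (rule lf_nondeg[OF lf])
    then show ?thesis by simp
  qed
  obtain c0 where c0: "\<And>x. q x - q (- x) = bq q x c0" using c by blast
  have ann: "bq q y c = 0" if "y + y = 0" for y
  proof -
    have "- y = y" using that by (rule minus_unique)
    then show ?thesis using c[of y] by simp
  qed
  obtain a where a: "a + a = c" using halving[OF lf ann] by blast
  define qo where "qo x = q x - bq q x a" for x
  have bqo: "bq qo = bq q"
  proof (rule ext, rule ext)
    fix x y
    have "bq q (x + y) a = bq q x a + bq q y a" by (rule lf_addL[OF lf])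
    then show "bq qo x y = bq q x y"
      unfolding bq_def[of qo] qo_def by (simp add: bq_def[of q x y] algebra_simps)
  qed
  have qlfo: "quadratic_linking_form qo"
    unfolding quadratic_linking_form_def quadratic_linking_function_def
  proof (intro conjI allI)
    show "linking_form (bq qo)" using bqo lf by simp
    fix x
    have "q (- x) = q x - bq q x c" using c[of x] by (simp add: algebra_simps)
    then show "qo (- x) = qo x"
      by (simp add: qo_def lf_minusL[OF lf] a[symmetric] lf_addR[OF lf] algebra_simps)
  qed
  have qs: "q = qshift qo a" by (rule ext) (simp add: qshift_def bqo qo_def)
  show ?thesis unfolding beta_def
  proof (rule the_equality)
    show "\<exists>qo a'. quadratic_linking_form qo \<and> bq qo = bq q \<and> q = qshift qo a' \<and> c = a' + a'"
      using qlfo bqo qs a by blast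
  next
    fix c' assume "\<exists>qo a'. quadratic_linking_form qo \<and> bq qo = bq q \<and> q = qshift qo a' \<and> c' = a' + a'"
    then obtain qo' a' where h: "quadratic_linking_form qo'" "bq qo' = bq q" "q = qshift qo' a'" "c' = a' + a'"
      by blast
    have ev: "qo' (- x) = qo' x" for x using h(1) by (simp add: quadratic_linking_form_def)
    show "c' = c"
    proof (rule uniq)
      fix x
      have qq: "q z = qo' z + bq q z a'" for z
      proof -
        have "q z = qshift qo' a' z" using h(3) by simp
        also have "\<dots> = qo' z + bq q z a'" unfolding qshift_def h(2) ..
        finally show ?thesis .
      qed
      have "q x - q (- x) = bq q x a' - bq q (- x) a'"
        unfolding qq[of x] qq[of "- x"] ev[of x] by simp
      then show "q x - q (- x) = bq q x c'"
        using h(4) by (simp add: lf_minusL[OF lf] lf_addR[OF lf])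
    qed
  qed
qed

lemma beta_prop:
  assumes Q: "quadratic_linking_function q"
  shows "q x - q (- x) = bq q x (beta q)"
proof -
  have lf: "linking_form (bq q)" using qlf_lf[OF Q] .
  obtain c where c: "\<And>x. q x - q (- x) = bq q x c"
    using duality[OF lf, of "\<lambda>x. q x - q (- x)"] d_hom[OF Q] by blast
  then show ?thesis using beta_unique[OF Q c] by simp
qed


lemma norm_qz_exp[simp]: "norm (qz_exp a) = 1"
  by transfer simp

lemma gs_nonzero:
  fixes q :: "'g::{finite,ab_group_add} \<Rightarrow> qz"
  assumes Q: "quadratic_linking_function q"
  shows "gauss_sum q \<noteq> 0"
proof -
  have lf: "linking_form (bq q)" using qlf_lf[OF Q] .
  have "gauss_sum q * gauss_sum (\<lambda>x. - q x) = (\<Sum>x\<in>UNIV. \<Sum>y\<in>UNIV. qz_exp (q x) * qz_exp (- q y))"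
    by (simp add: gauss_sum_def sum_product)
  also have "\<dots> = (\<Sum>y\<in>UNIV. \<Sum>x\<in>UNIV. qz_exp (q x) * qz_exp (- q y))" by (rule sum.swap)
  also have "\<dots> = (\<Sum>y\<in>UNIV. \<Sum>z\<in>UNIV. qz_exp (q z) * qz_exp (bq q y z))"
  proof (rule sum.cong[OF refl])
    fix y :: 'g
    have "(\<Sum>x\<in>UNIV. qz_exp (q x) * qz_exp (- q y)) = (\<Sum>z\<in>UNIV. qz_exp (q (z + y)) * qz_exp (- q y))"
      by (rule sum_shift[symmetric])
    also have "\<dots> = (\<Sum>z\<in>UNIV. qz_exp (q z) * qz_exp (bq q y z))"
    proof (rule sum.cong[OF refl])
      fix z
      have "q (z + y) + - q y = q z + bq q y z"
        using q_add[of q z y] lf_sym[OF lf, of z y] by simp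
      then show "qz_exp (q (z + y)) * qz_exp (- q y) = qz_exp (q z) * qz_exp (bq q y z)"
        by (metis qz_exp_add)
    qed
    finally show "(\<Sum>x\<in>UNIV. qz_exp (q x) * qz_exp (- q y)) = (\<Sum>z\<in>UNIV. qz_exp (q z) * qz_exp (bq q y z))" .
  qed
  also have "\<dots> = (\<Sum>z\<in>UNIV. qz_exp (q z) * (\<Sum>y\<in>UNIV. qz_exp (bq q y z)))"
    by (subst sum.swap) (simp add: sum_distrib_left)
  also have "\<dots> = (\<Sum>z\<in>UNIV. if z = (0::'g) then of_nat (card (UNIV::'g set)) else 0)"
    by (rule sum.cong[OF refl]) (simp add: orth[OF lf] q_zero[OF Q])
  also have "\<dots> = of_nat (card (UNIV::'g set))" by simp
  finally have "gauss_sum q * gauss_sum (\<lambda>x. - q x) \<noteq> 0" by simp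
  then show ?thesis by auto
qed

lemma ints_small: "(x::real) \<in> \<int> \<Longrightarrow> \<bar>x\<bar> < 1 \<Longrightarrow> x = 0"
proof -
  assume "x \<in> \<int>" "\<bar>x\<bar> < 1"
  then obtain n :: int where n: "x = of_int n" "\<bar>real_of_int n\<bar> < 1" by (auto elim: Ints_cases)
  then have "\<bar>n\<bar> < 1" by linarith
  then have "n = 0" by simp
  then show ?thesis using n by simp
qed

lemma arg_eq:
  assumes "kervaire_arf q0 - kervaire_arf q1 \<in> \<int>"
  shows "Arg (gauss_sum q0) = Arg (gauss_sum q1)"
proof -
  let ?A = "Arg (gauss_sum q0)" and ?B = "Arg (gauss_sum q1)"
  have "\<bar>?A / (2 * pi) - ?B / (2 * pi)\<bar> < 1"
    using Arg_bounded[of "gauss_sum q0"] Arg_bounded[of "gauss_sum q1"] pi_gt_zero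
    by (simp add: diff_divide_distrib[symmetric] abs_less_iff field_simps)
  then have "?A / (2 * pi) - ?B / (2 * pi) = 0"
    using assms ints_small unfolding kervaire_arf_def by blast
  then show ?thesis by simp
qed

theorem theorem3p5:
  fixes q0 q1 :: "'g::{finite,ab_group_add} \<Rightarrow> qz"
  assumes "quadratic_linking_function q0"
      and "quadratic_linking_function q1"
  shows "isometric q0 q1 \<longleftrightarrow>
           pair_iso (bq q0) (beta q0) (bq q1) (beta q1) \<and>
           kervaire_arf q0 - kervaire_arf q1 \<in> \<int>"
proof
  note Q0 = assms(1) and Q1 = assms(2)
  have lf0: "linking_form (bq q0)" using qlf_lf[OF Q0] .
  have lf1: "linking_form (bq q1)" using qlf_lf[OF Q1] .
  {
    assume "isometric q0 q1"
    then obtain \<theta> where aut: "group_automorphism \<theta>" and comp: "q1 \<circ> \<theta> = q0"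
      unfolding isometric_def by blast
    have hom: "\<And>x y. \<theta> (x + y) = \<theta> x + \<theta> y" and bij: "bij \<theta>"
      using aut unfolding group_automorphism_def by auto
    have q0e: "q0 x = q1 (\<theta> x)" for x using comp by auto
    have bqe: "bq q1 (\<theta> x) (\<theta> y) = bq q0 x y" for x y
      by (simp add: bq_def q0e hom)
    have "beta q1 = \<theta> (beta q0)"
    proof (rule beta_unique[OF Q1])
      fix x
      obtain x' where x': "x = \<theta> x'" using bij by (metis bij_pointE)
      have "q1 x - q1 (- x) = q0 x' - q0 (- x')"
        by (simp add: x' q0e hom_minus[of \<theta>, OF hom])
      also have "\<dots> = bq q0 x' (beta q0)" by (rule beta_prop[OF Q0])
      also have "\<dots> = bq q1 x (\<theta> (beta q0))" by (simp add: x' bqe)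
      finally show "q1 x - q1 (- x) = bq q1 x (\<theta> (beta q0))" .
    qed
    then have P: "pair_iso (bq q0) (beta q0) (bq q1) (beta q1)"
      unfolding pair_iso_def using aut bqe by metis
    have "gauss_sum q0 = gauss_sum q1"
      unfolding gauss_sum_def q0e
      by (rule sum.reindex_bij_betw[of \<theta> UNIV UNIV "\<lambda>y. qz_exp (q1 y)"]) (use bij in \<open>simp add: bij_def\<close>)
    then show "pair_iso (bq q0) (beta q0) (bq q1) (beta q1) \<and> kervaire_arf q0 - kervaire_arf q1 \<in> \<int>"
      using P by (simp add: kervaire_arf_def)
  }
  assume "pair_iso (bq q0) (beta q0) (bq q1) (beta q1) \<and> kervaire_arf q0 - kervaire_arf q1 \<in> \<int>"
  then obtain \<theta> where aut: "group_automorphism \<theta>" and bqe: "\<And>x y. bq q1 (\<theta> x) (\<theta> y) = bq q0 x y"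
      and bt: "\<theta> (beta q0) = beta q1" and K: "kervaire_arf q0 - kervaire_arf q1 \<in> \<int>"
    unfolding pair_iso_def by blast
  have hom: "\<And>x y. \<theta> (x + y) = \<theta> x + \<theta> y" and bij: "bij \<theta>"
    using aut unfolding group_automorphism_def by auto
  define h where "h x = q1 (\<theta> x) - q0 x" for x
  have hhom: "h (x + y) = h x + h y" for x y
    using q_add[of q1 "\<theta> x" "\<theta> y"] q_add[of q0 x y] bqe[of x y]
    by (simp add: h_def hom algebra_simps)
  have "h x - h (- x) = 0" for x
  proof -
    have "h x - h (- x) = (q1 (\<theta> x) - q1 (- \<theta> x)) - (q0 x - q0 (- x))"
      by (simp add: h_def hom_minus[of \<theta>, OF hom] algebra_simps)
    also have "\<dots> = bq q1 (\<theta> x) (beta q1) - bq q0 x (beta q0)"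
      by (simp add: beta_prop[OF Q0] beta_prop[OF Q1])
    also have "\<dots> = 0" by (simp add: bt[symmetric] bqe)
    finally show ?thesis .
  qed
  then have hh: "h x + h x = 0" for x
    using hom_minus[of h, OF hhom] by (metis diff_minus_eq_add)
  obtain c where c: "\<And>x. h x = bq q0 x c" using duality[OF lf0 hhom] by blast
  have cc: "c + c = 0"
    by (rule lf_nondeg[OF lf0]) (simp add: lf_addR[OF lf0] c[symmetric] hh)
  have "gauss_sum q1 = (\<Sum>x\<in>UNIV. qz_exp (q1 (\<theta> x)))"
    unfolding gauss_sum_def
    by (rule sum.reindex_bij_betw[symmetric]) (use bij in \<open>simp add: bij_def\<close>)
  also have "\<dots> = (\<Sum>x\<in>UNIV. qz_exp (q0 (x + c)) * qz_exp (- q0 c))"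
  proof (rule sum.cong[OF refl])
    fix x
    have "q1 (\<theta> x) = q0 (x + c) + - q0 c"
      using q_add[of q0 x c] c[of x] by (simp add: h_def algebra_simps)
    then show "qz_exp (q1 (\<theta> x)) = qz_exp (q0 (x + c)) * qz_exp (- q0 c)"
      by (simp add: qz_exp_diff)
  qed
  also have "\<dots> = qz_exp (- q0 c) * gauss_sum q0"
    unfolding gauss_sum_def sum_distrib_left
    using sum_shift[of "\<lambda>x. qz_exp (q0 x) * qz_exp (- q0 c)" c] by (simp add: mult.commute)
  finally have G: "gauss_sum q1 = qz_exp (- q0 c) * gauss_sum q0" .
  have "gauss_sum q1 = gauss_sum q0"
  proof -
    have "cmod (gauss_sum q1) = cmod (gauss_sum q0)" by (simp add: G norm_mult)
    then show ?thesis using arg_eq[OF K] by (metis rcis_cmod_Arg)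
  qed
  then have "qz_exp (- q0 c) = 1" using G gs_nonzero[OF Q0] by simp
  then have qc: "q0 c = 0" using qz_exp_eq_1 by force
  have bcc: "bq q0 c c = 0"
    using q_add[of q0 c c] q_zero[OF Q0] qc cc by simp
  define \<psi> where "\<psi> x = x + (if h x = 0 then 0 else c)" for x
  have hpsi: "h (\<psi> x) = h x" for x
    using hom_zero[of h, OF hhom] by (simp add: \<psi>_def hhom c[of c] bcc)
  have psipsi: "\<psi> (\<psi> x) = x" for x
    using hpsi[of x] cc by (auto simp: \<psi>_def)
  have psihom: "\<psi> (x + y) = \<psi> x + \<psi> y" for x y
  proof (cases "h x = 0 \<or> h y = 0")
    case True then show ?thesis by (auto simp: \<psi>_def hhom algebra_simps)
  next
    case False
    then have "h x = h y" using qz_half hh by blast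
    then have "h (x + y) = 0" using hh[of x] by (simp add: hhom)
    then show ?thesis using False cc by (simp add: \<psi>_def algebra_simps)
  qed
  have qpsi: "q0 (\<psi> x) = q1 (\<theta> x)" for x
    using q_add[of q0 x c] c[of x] qc by (auto simp: \<psi>_def h_def algebra_simps)
  have bpsi: "bij \<psi>"
    unfolding bij_def inj_def surj_def by (metis psipsi)
  have "group_automorphism (\<theta> \<circ> \<psi>)"
    unfolding group_automorphism_def using bij_comp[OF bpsi bij] by (simp add: psihom hom)
  moreover have "q1 \<circ> (\<theta> \<circ> \<psi>) = q0"
    by (rule ext) (simp add: qpsi[symmetric] psipsi)
  ultimately show "isometric q0 q1" unfolding isometric_def by blast
qed

end
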